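(* If $\mathbf{A}$ is a finite algebra with a Maltsev polynomial, then $\mathbf{A}$ is covered by the set of its $\langle\alpha,\beta\rangle$-minimal sets, where $\langle\alpha,\beta\rangle$ runs over all prime quotients $\alpha\prec\beta$ of the congruence lattice of $\mathbf{A}$.
   Context: A neighborhood of $\mathbf{A}$ is the range of an idempotent unary polynomial ($e(e(x))=e(x)$). For a prime quotient $\alpha\prec\beta$ in $\mathrm{Con}(\mathbf A)$, an $\langle\alpha,\beta\rangle$-minimal set is a set $e(A)$, $e$ a unary polynomial with $e(\beta)\not\subseteq\alpha$, that is minimal under inclusion among such sets (tame congruence theory). If $\mathcal U$ and $\mathcal V$ are sets of neighborhoods of $\mathbf{A}$, then $\mathcal U$ covers $\mathcal V$ if for every $V\in\mathcal V$ there are $U_1,\dots,U_k\in\mathcal U$, idempotent unary polynomials $e_1,\dots,e_k,f$ and polynomials $\lambda,\rho_1,\dots,\rho_k$ of $\mathbf{A}$ with $f(A)=V$, $e_i(A)=U_i$ and $\lambda(e_1\rho_1(x),\dots,e_k\rho_k(x))=f(x)$ for all $x\in A$. $\mathcal U$ covers $\mathbf{A}$ if it covers $\{A\}$. A Maltsev polynomial is a polynomial $m$ with $m(x,y,y)=x=m(y,y,x)$. *)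

theory Defs
  imports Main
begin

text \<open>An algebra is given by a carrier set A and a set F of fundamental operations,
  each a pair (m, f) of an arity m and a function f on lists of length m.\<close>

definition algebra :: "'a set \<Rightarrow> (nat \<times> ('a list \<Rightarrow> 'a)) set \<Rightarrow> bool" where
  "algebra A F \<longleftrightarrow> A \<noteq> {} \<and>
     (\<forall>(m, f) \<in> F. \<forall>xs. length xs = m \<and> set xs \<subseteq> A \<longrightarrow> f xs \<in> A)"

text \<open>n-ary polynomial operations: the clone generated by the fundamental operations
  and all constants of A (functions on lists of length n; only values on A^n matter).\<close>

inductive_set poly :: "'a set \<Rightarrow> (nat \<times> ('a list \<Rightarrow> 'a)) set \<Rightarrow> nat \<Rightarrow> ('a list \<Rightarrow> 'a) set"
  for A F n where
  proj: "i < n \<Longrightarrow> (\<lambda>xs. xs ! i) \<in> poly A F n"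
| const: "c \<in> A \<Longrightarrow> (\<lambda>xs. c) \<in> poly A F n"
| oper: "(m, f) \<in> F \<Longrightarrow> (\<forall>j<m. g j \<in> poly A F n) \<Longrightarrow>
          (\<lambda>xs. f (map (\<lambda>j. g j xs) [0..<m])) \<in> poly A F n"

definition upoly :: "'a set \<Rightarrow> (nat \<times> ('a list \<Rightarrow> 'a)) set \<Rightarrow> ('a \<Rightarrow> 'a) set" where
  "upoly A F = {(\<lambda>x. p [x]) | p. p \<in> poly A F 1}"

definition idempotent_on :: "'a set \<Rightarrow> ('a \<Rightarrow> 'a) \<Rightarrow> bool" where
  "idempotent_on A e \<longleftrightarrow> (\<forall>x\<in>A. e (e x) = e x)"

definition Con :: "'a set \<Rightarrow> (nat \<times> ('a list \<Rightarrow> 'a)) set \<Rightarrow> 'a rel set" where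
  "Con A F = {\<theta>. equiv A \<theta> \<and>
     (\<forall>(m, f) \<in> F. \<forall>xs ys. length xs = m \<and> length ys = m \<and> set xs \<subseteq> A \<and> set ys \<subseteq> A \<and>
        (\<forall>i<m. (xs ! i, ys ! i) \<in> \<theta>) \<longrightarrow> (f xs, f ys) \<in> \<theta>)}"

definition prime_quotient :: "'a set \<Rightarrow> (nat \<times> ('a list \<Rightarrow> 'a)) set \<Rightarrow> 'a rel \<Rightarrow> 'a rel \<Rightarrow> bool" where
  "prime_quotient A F \<alpha> \<beta> \<longleftrightarrow> \<alpha> \<in> Con A F \<and> \<beta> \<in> Con A F \<and> \<alpha> \<subset> \<beta> \<and>
     \<not> (\<exists>\<gamma>\<in>Con A F. \<alpha> \<subset> \<gamma> \<and> \<gamma> \<subset> \<beta>)"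

definition separates :: "('a \<Rightarrow> 'a) \<Rightarrow> 'a rel \<Rightarrow> 'a rel \<Rightarrow> bool" where
  "separates e \<alpha> \<beta> \<longleftrightarrow> \<not> ((\<lambda>(x, y). (e x, e y)) ` \<beta> \<subseteq> \<alpha>)"

definition minimal_sets :: "'a set \<Rightarrow> (nat \<times> ('a list \<Rightarrow> 'a)) set \<Rightarrow> 'a rel \<Rightarrow> 'a rel \<Rightarrow> 'a set set" where
  "minimal_sets A F \<alpha> \<beta> =
     {U. (\<exists>e\<in>upoly A F. separates e \<alpha> \<beta> \<and> U = e ` A) \<and>
         (\<forall>e\<in>upoly A F. separates e \<alpha> \<beta> \<and> e ` A \<subseteq> U \<longrightarrow> e ` A = U)}"

definition covers :: "'a set \<Rightarrow> (nat \<times> ('a list \<Rightarrow> 'a)) set \<Rightarrow> 'a set set \<Rightarrow> 'a set set \<Rightarrow> bool" where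
  "covers A F \<U> \<V> \<longleftrightarrow> (\<forall>V\<in>\<V>. \<exists>k::nat. \<exists>U e \<rho> lam f.
     (\<forall>i<k. U i \<in> \<U> \<and> e i \<in> upoly A F \<and> idempotent_on A (e i) \<and> e i ` A = U i
            \<and> \<rho> i \<in> upoly A F) \<and>
     f \<in> upoly A F \<and> idempotent_on A f \<and> f ` A = V \<and>
     lam \<in> poly A F k \<and>
     (\<forall>x\<in>A. lam (map (\<lambda>i. e i (\<rho> i x)) [0..<k]) = f x))"

definition has_maltsev :: "'a set \<Rightarrow> (nat \<times> ('a list \<Rightarrow> 'a)) set \<Rightarrow> bool" where
  "has_maltsev A F \<longleftrightarrow> (\<exists>m\<in>poly A F 3. \<forall>x\<in>A. \<forall>y\<in>A. m [x, y, y] = x \<and> m [y, y, x] = x)"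

end

theory Submission
  imports Defs "HOL-Library.FuncSet"
begin

lemma poly_in_A:
  assumes alg: "algebra A F"
  shows "p \<in> poly A F n \<Longrightarrow> length xs = n \<Longrightarrow> set xs \<subseteq> A \<Longrightarrow> p xs \<in> A"
proof (induction p rule: poly.induct)
  case (proj i) then show ?case by auto
next
  case (const c) then show ?case by auto
next
  case (oper m f g)
  have "set (map (\<lambda>j. g j xs) [0..<m]) \<subseteq> A" using oper by auto
  moreover have "length (map (\<lambda>j. g j xs) [0..<m]) = m" by simp
  ultimately show ?case using alg oper.hyps(1) unfolding algebra_def by fastforce
qed

lemma poly_subst:
  "p \<in> poly A F n \<Longrightarrow> (\<forall>j<n. q j \<in> poly A F k) \<Longrightarrow>
   (\<lambda>xs. p (map (\<lambda>j. q j xs) [0..<n])) \<in> poly A F k"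
proof (induction p rule: poly.induct)
  case (proj i) then show ?case by simp
next
  case (const c) then show ?case by (simp add: poly.const)
next
  case (oper m f g)
  have "(\<lambda>xs. f (map (\<lambda>j. (\<lambda>xs. g j (map (\<lambda>j. q j xs) [0..<n])) xs) [0..<m])) \<in> poly A F k"
    by (rule poly.oper[OF oper.hyps(1)]) (use oper in auto)
  then show ?case by simp
qed

lemma upolyI: "p \<in> poly A F 1 \<Longrightarrow> u = (\<lambda>x. p [x]) \<Longrightarrow> u \<in> upoly A F"
  unfolding upoly_def by auto

lemma upolyE: "u \<in> upoly A F \<Longrightarrow> (\<And>p. p \<in> poly A F 1 \<Longrightarrow> u = (\<lambda>x. p [x]) \<Longrightarrow> P) \<Longrightarrow> P"
  unfolding upoly_def by auto

lemma upoly_A: "algebra A F \<Longrightarrow> u \<in> upoly A F \<Longrightarrow> x \<in> A \<Longrightarrow> u x \<in> A"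
  by (erule upolyE) (auto intro: poly_in_A)

lemma upoly_id: "(\<lambda>x. x) \<in> upoly A F"
  by (rule upolyI[OF poly.proj[of 0]]) auto

lemma upoly_const: "c \<in> A \<Longrightarrow> (\<lambda>x. c) \<in> upoly A F"
  by (rule upolyI[OF poly.const]) auto

lemma upoly_comb:
  assumes t: "t \<in> poly A F n" and u: "\<forall>j<n. u j \<in> upoly A F"
  shows "(\<lambda>x. t (map (\<lambda>j. u j x) [0..<n])) \<in> upoly A F"
proof -
  have "\<forall>j. \<exists>p. j < n \<longrightarrow> p \<in> poly A F 1 \<and> u j = (\<lambda>x. p [x])"
    using u unfolding upoly_def by auto
  then obtain P where P: "\<And>j. j < n \<Longrightarrow> P j \<in> poly A F 1 \<and> u j = (\<lambda>x. P j [x])"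
    by metis
  have "(\<lambda>xs. t (map (\<lambda>j. P j xs) [0..<n])) \<in> poly A F 1"
    using poly_subst[OF t, of P] P by auto
  moreover have "(\<lambda>x. t (map (\<lambda>j. u j x) [0..<n])) = (\<lambda>x. (\<lambda>xs. t (map (\<lambda>j. P j xs) [0..<n])) [x])"
    using P by (auto intro!: ext arg_cong[where f=t])
  ultimately show ?thesis by (rule upolyI)
qed

lemma upoly_comp: "u \<in> upoly A F \<Longrightarrow> v \<in> upoly A F \<Longrightarrow> (\<lambda>x. u (v x)) \<in> upoly A F"
proof -
  assume u: "u \<in> upoly A F" and v: "v \<in> upoly A F"
  from u obtain p where p: "p \<in> poly A F 1" "u = (\<lambda>x. p [x])" by (rule upolyE)
  have "(\<lambda>x. p (map (\<lambda>j. v x) [0..<1])) \<in> upoly A F"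
    using upoly_comb[OF p(1), of "\<lambda>_. v"] v by simp
  then show ?thesis using p by simp
qed

lemma map3: "map f [0..<3] = [f 0, f 1, f 2]"
  by (simp add: eval_nat_numeral upt_rec)

lemma all3: "(\<forall>i<(3::nat). P i) = (P 0 \<and> P 1 \<and> P 2)"
  by (auto simp: eval_nat_numeral less_Suc_eq)

lemma upoly_m3:
  assumes "m \<in> poly A F 3" "u1 \<in> upoly A F" "u2 \<in> upoly A F" "u3 \<in> upoly A F"
  shows "(\<lambda>x. m [u1 x, u2 x, u3 x]) \<in> upoly A F"
proof -
  have "(\<lambda>x. m (map (\<lambda>j. ([u1,u2,u3] ! j) x) [0..<3])) \<in> upoly A F"
    using assms by (intro upoly_comb) (auto simp: all3)
  then show ?thesis by (simp add: map3)
qed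

lemma Con_equiv: "\<gamma> \<in> Con A F \<Longrightarrow> equiv A \<gamma>"
  unfolding Con_def by auto

lemma Con_sub: "\<gamma> \<in> Con A F \<Longrightarrow> \<gamma> \<subseteq> A \<times> A"
  using Con_equiv equiv_type by blast

lemma Con_refl: "\<gamma> \<in> Con A F \<Longrightarrow> x \<in> A \<Longrightarrow> (x, x) \<in> \<gamma>"
  using Con_equiv equiv_def refl_onD by metis

lemma Con_sym: "\<gamma> \<in> Con A F \<Longrightarrow> (x, y) \<in> \<gamma> \<Longrightarrow> (y, x) \<in> \<gamma>"
  using Con_equiv equiv_def symD by metis

lemma Con_trans: "\<gamma> \<in> Con A F \<Longrightarrow> (x, y) \<in> \<gamma> \<Longrightarrow> (y, z) \<in> \<gamma> \<Longrightarrow> (x, z) \<in> \<gamma>"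
  using Con_equiv equiv_def transD by metis

lemma poly_cong:
  assumes alg: "algebra A F" and g: "\<gamma> \<in> Con A F"
  shows "p \<in> poly A F n \<Longrightarrow> length xs = n \<Longrightarrow> length ys = n \<Longrightarrow> set xs \<subseteq> A \<Longrightarrow> set ys \<subseteq> A
    \<Longrightarrow> (\<forall>i<n. (xs ! i, ys ! i) \<in> \<gamma>) \<Longrightarrow> (p xs, p ys) \<in> \<gamma>"
proof (induction p rule: poly.induct)
  case (proj i) then show ?case by auto
next
  case (const c) then show ?case using Con_refl[OF g] by auto
next
  case (oper m f g')
  let ?as = "map (\<lambda>j. g' j xs) [0..<m]" and ?bs = "map (\<lambda>j. g' j ys) [0..<m]"
  have "set ?as \<subseteq> A" "set ?bs \<subseteq> A" using oper by (auto intro: poly_in_A[OF alg])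
  moreover have "\<forall>i<m. (?as ! i, ?bs ! i) \<in> \<gamma>" using oper by auto
  ultimately show ?case using g oper.hyps(1) unfolding Con_def by fastforce
qed

lemma upoly_cong:
  assumes alg: "algebra A F" and g: "\<gamma> \<in> Con A F" and u: "u \<in> upoly A F" and xy: "(x, y) \<in> \<gamma>"
  shows "(u x, u y) \<in> \<gamma>"
proof -
  from u obtain p where p: "p \<in> poly A F 1" "u = (\<lambda>x. p [x])" by (rule upolyE)
  have "x \<in> A" "y \<in> A" using Con_sub[OF g] xy by auto
  then show ?thesis using poly_cong[OF alg g p(1), of "[x]" "[y]"] xy p(2) by auto
qed

lemma m3_cong:
  assumes alg: "algebra A F" and g: "\<gamma> \<in> Con A F" and m: "m \<in> poly A F 3"
    and "(a1, b1) \<in> \<gamma>" "(a2, b2) \<in> \<gamma>" "(a3, b3) \<in> \<gamma>"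
  shows "(m [a1, a2, a3], m [b1, b2, b3]) \<in> \<gamma>"
proof -
  have "{a1,a2,a3,b1,b2,b3} \<subseteq> A" using Con_sub[OF g] assms(4-6) by auto
  then show ?thesis using poly_cong[OF alg g m, of "[a1,a2,a3]" "[b1,b2,b3]"] assms(4-6)
    by (auto simp: all3)
qed

lemma map_nth': "length xs = m \<Longrightarrow> map ((!) xs) [0..<m] = xs"
  using map_nth by metis

lemma upoly_oper:
  assumes f: "(m, f) \<in> F" and u: "\<forall>j<m. u j \<in> upoly A F"
  shows "(\<lambda>x. f (map (\<lambda>j. u j x) [0..<m])) \<in> upoly A F"
proof -
  have "(\<lambda>xs. f (map (\<lambda>j. xs ! j) [0..<m])) \<in> poly A F m"
    by (rule poly.oper[OF f]) (auto intro: poly.proj)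
  from upoly_comb[OF this u] show ?thesis by (simp add: map_nth')
qed

lemma unary_closed_compat:
  assumes alg: "algebra A F" and eq: "equiv A \<theta>"
    and cl: "\<forall>u\<in>upoly A F. \<forall>x y. (x, y) \<in> \<theta> \<longrightarrow> (u x, u y) \<in> \<theta>"
  and f: "(m, f) \<in> F" and l: "length xs = m" "length ys = m" and s: "set xs \<subseteq> A" "set ys \<subseteq> A"
    and r: "\<forall>i<m. (xs ! i, ys ! i) \<in> \<theta>"
  shows "(f xs, f ys) \<in> \<theta>"
proof -
  define zs where "zs j = map (\<lambda>i. if i < j then ys ! i else xs ! i) [0..<m]" for j
  have zs0: "zs 0 = xs" unfolding zs_def using l by (simp add: map_nth')
  have "zs m = map ((!) ys) [0..<m]" unfolding zs_def by (rule map_cong) auto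
  then have zsm: "zs m = ys" using l by (simp add: map_nth')
  have "j \<le> m \<Longrightarrow> (f xs, f (zs j)) \<in> \<theta>" for j
  proof (induction j)
    case 0
    have "f xs \<in> A" using alg f l s unfolding algebra_def by auto
    then show ?case using zs0 eq by (simp add: equiv_def refl_on_def)
  next
    case (Suc j)
    then have j: "j < m" by simp
    define u where "u v = f (map (\<lambda>i. if i < j then ys ! i else if i = j then v else xs ! i) [0..<m])" for v
    have uu: "u \<in> upoly A F"
    proof -
      have "\<forall>i<m. (\<lambda>v. if i < j then ys ! i else if i = j then v else xs ! i) \<in> upoly A F"
      proof (intro allI impI)
        fix i assume i: "i < m"
        show "(\<lambda>v. if i < j then ys ! i else if i = j then v else xs ! i) \<in> upoly A F"
        proof (cases "i < j")
          case True
          have "ys ! i \<in> A" using s l i nth_mem[of i ys] by auto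
          then show ?thesis using True upoly_const[of "ys ! i" A F] by simp
        next
          case False
          show ?thesis
          proof (cases "i = j")
            case True then show ?thesis using False upoly_id[of A F] by simp
          next
            case False2: False
            have "xs ! i \<in> A" using s l i nth_mem[of i xs] by auto
            then show ?thesis using False False2 upoly_const[of "xs ! i" A F] by simp
          qed
        qed
      qed
      from upoly_oper[OF f this] show ?thesis unfolding u_def by simp
    qed
    have "u (xs ! j) = f (zs j)" unfolding u_def zs_def by (auto intro!: arg_cong[where f=f])
    moreover have "u (ys ! j) = f (zs (Suc j))" unfolding u_def zs_def
      by (auto intro!: arg_cong[where f=f] simp: less_Suc_eq)
    moreover have "(u (xs ! j), u (ys ! j)) \<in> \<theta>" using cl uu r j by auto
    ultimately show ?case using Suc eq by (metis Suc_leD equiv_def transD)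
  qed
  from this[of m] zsm have "(f xs, f ys) \<in> \<theta>" by simp
  then show "(f xs, f ys) \<in> \<theta>" .
qed

lemma unary_closed_Con:
  assumes alg: "algebra A F" and eq: "equiv A \<theta>"
    and cl: "\<And>u x y. u \<in> upoly A F \<Longrightarrow> (x, y) \<in> \<theta> \<Longrightarrow> (u x, u y) \<in> \<theta>"
  shows "\<theta> \<in> Con A F"
proof -
  have cl': "\<forall>u\<in>upoly A F. \<forall>x y. (x, y) \<in> \<theta> \<longrightarrow> (u x, u y) \<in> \<theta>" using cl by blast
  note C = unary_closed_compat[of A F \<theta>, OF alg eq cl']
  show ?thesis unfolding Con_def using eq C by auto
qed

lemma UNIV_Con: "algebra A F \<Longrightarrow> A \<times> A \<in> Con A F"
  by (rule unary_closed_Con) (auto simp: equiv_def refl_on_def sym_def trans_def intro: upoly_A)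

lemma Id_Con: "algebra A F \<Longrightarrow> Id_on A \<in> Con A F"
  by (rule unary_closed_Con) (auto simp: equiv_def refl_on_def sym_def trans_def intro: upoly_A)

lemma Con_Int: "algebra A F \<Longrightarrow> \<gamma> \<in> Con A F \<Longrightarrow> \<delta> \<in> Con A F \<Longrightarrow> \<gamma> \<inter> \<delta> \<in> Con A F"
  apply (rule unary_closed_Con, assumption)
  subgoal unfolding equiv_def refl_on_def sym_def trans_def
    using Con_sub[of \<gamma> A F] Con_refl[of \<gamma> A F] Con_refl[of \<delta> A F] Con_sym[of \<gamma> A F] Con_sym[of \<delta> A F]
      Con_trans[of \<gamma> A F] Con_trans[of \<delta> A F] by blast
  by (auto intro: upoly_cong)

lemma pq_cover:
  assumes pq: "prime_quotient A F \<alpha> \<beta>" and g: "\<gamma> \<in> Con A F" "\<alpha> \<subseteq> \<gamma>" "\<gamma> \<subseteq> \<beta>"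
    and c: "(c, d) \<in> \<gamma>" "(c, d) \<notin> \<alpha>"
  shows "\<gamma> = \<beta>"
  using assms unfolding prime_quotient_def by blast

lemma sep_lemma:
  assumes alg: "algebra A F" and pq: "prime_quotient A F \<alpha> \<beta>"
    and e: "e \<in> upoly A F" "separates e \<alpha> \<beta>"
    and cd: "(c, d) \<in> \<beta>" "(c, d) \<notin> \<alpha>"
  shows "\<exists>t\<in>upoly A F. (e (t c), e (t d)) \<notin> \<alpha>"
proof (rule ccontr)
  assume "\<not> ?thesis"
  then have H: "\<And>t. t \<in> upoly A F \<Longrightarrow> (e (t c), e (t d)) \<in> \<alpha>" by blast
  have aC: "\<alpha> \<in> Con A F" and bC: "\<beta> \<in> Con A F" using pq unfolding prime_quotient_def by auto
  define \<theta> where "\<theta> = {(x, y). x \<in> A \<and> y \<in> A \<and> (\<forall>t\<in>upoly A F. (e (t x), e (t y)) \<in> \<alpha>)}"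
  have eqv: "equiv A \<theta>"
  proof -
    have "\<theta> \<subseteq> A \<times> A" unfolding \<theta>_def by auto
    moreover have "(x, x) \<in> \<theta>" if "x \<in> A" for x
      unfolding \<theta>_def using that Con_refl[OF aC] upoly_A[OF alg] e(1) by auto
    moreover have "(y, x) \<in> \<theta>" if "(x, y) \<in> \<theta>" for x y
      using that Con_sym[OF aC] unfolding \<theta>_def by auto
    moreover have "(x, z) \<in> \<theta>" if "(x, y) \<in> \<theta>" "(y, z) \<in> \<theta>" for x y z
      using that Con_trans[OF aC] unfolding \<theta>_def by blast
    ultimately show ?thesis unfolding equiv_def refl_on_def sym_def trans_def by blast
  qed
  have thC: "\<theta> \<in> Con A F"
  proof (rule unary_closed_Con[OF alg eqv])
    fix u x y assume u: "u \<in> upoly A F" and xy: "(x, y) \<in> \<theta>"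
    then show "(u x, u y) \<in> \<theta>" unfolding \<theta>_def
      using upoly_A[OF alg u] upoly_comp[of _ A F u] by auto
  qed
  have ath: "\<alpha> \<subseteq> \<theta>" unfolding \<theta>_def
    using Con_sub[OF aC] upoly_cong[OF alg aC] upoly_comp[OF _ e(1)] e(1) by auto
  have "c \<in> A" "d \<in> A" using Con_sub[OF bC] cd by auto
  then have "(c, d) \<in> \<theta>" using H unfolding \<theta>_def by auto
  then have "\<theta> \<inter> \<beta> = \<beta>"
    using pq_cover[OF pq Con_Int[OF alg thC bC]] ath pq cd unfolding prime_quotient_def by blast
  then have "\<And>x y. (x, y) \<in> \<beta> \<Longrightarrow> (e x, e y) \<in> \<alpha>" unfolding \<theta>_def using upoly_id by fastforce
  then show False using e(2) unfolding separates_def by auto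
qed

lemma perm_power:
  assumes fin: "finite U" and h: "h ` U = U"
  shows "\<exists>n>0. \<forall>u\<in>U. (h ^^ n) u = u"
proof -
  have inj: "inj_on h U" using finite_surj_inj[OF fin] h by simp
  have img: "(h ^^ i) ` U = U" for i
  proof (induction i)
    case 0 then show ?case by simp
  next
    case (Suc i)
    have "(h ^^ Suc i) ` U = h ` ((h ^^ i) ` U)" by (simp add: image_image)
    then show ?case using Suc h by simp
  qed
  have injp: "inj_on (h ^^ i) U" for i
  proof (induction i)
    case 0 then show ?case by simp
  next
    case (Suc i)
    then show ?case using inj img[of i] comp_inj_on[of "h ^^ i" U h] by (simp add: comp_def)
  qed
  define R where "R i = restrict (h ^^ i) U" for i
  have "R i \<in> U \<rightarrow>\<^sub>E U" for i unfolding R_def using img[of i] by auto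
  then have "range R \<subseteq> U \<rightarrow>\<^sub>E U" by auto
  moreover have "finite (U \<rightarrow>\<^sub>E U)" using fin by (simp add: finite_PiE)
  ultimately have "finite (range R)" using finite_subset by blast
  then have "\<not> inj R" using finite_imageD infinite_UNIV_nat by blast
  then obtain i j where ij: "i \<noteq> j" "R i = R j" unfolding inj_def by blast
  then obtain a b where ab: "a < b" "R a = R b" by (metis linorder_neq_iff)
  show ?thesis
  proof (intro exI conjI ballI)
    show "0 < b - a" using ab by simp
    fix u assume u: "u \<in> U"
    have hb: "h ^^ b = h ^^ a \<circ> h ^^ (b - a)" using ab(1) by (metis funpow_add le_add_diff_inverse less_imp_le)
    have "(h ^^ a) ((h ^^ (b - a)) u) = (h ^^ a) u"
    proof -
      have "(h ^^ b) u = (h ^^ a) u" using ab(2) u unfolding R_def by (metis restrict_apply')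
      then show ?thesis using hb by simp
    qed
    moreover have "(h ^^ (b - a)) u \<in> U" using img[of "b - a"] u by auto
    ultimately show "(h ^^ (b - a)) u = u" using injp[of a] u by (meson inj_on_def)
  qed
qed

lemma upoly_funpow: "h \<in> upoly A F \<Longrightarrow> (h ^^ n) \<in> upoly A F"
proof (induction n)
  case 0 then show ?case using upoly_id by (simp add: id_def)
next
  case (Suc n)
  then have "(\<lambda>x. h ((h ^^ n) x)) \<in> upoly A F" using upoly_comp by blast
  then show ?case by (simp add: comp_def)
qed

locale malg =
  fixes A :: "'a set" and F :: "(nat \<times> ('a list \<Rightarrow> 'a)) set" and m :: "'a list \<Rightarrow> 'a"
  assumes alg: "algebra A F" and fin: "finite A" and mp: "m \<in> poly A F 3"
    and mx1: "\<And>x y. x \<in> A \<Longrightarrow> y \<in> A \<Longrightarrow> m [x, y, y] = x"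
    and mx2: "\<And>x y. x \<in> A \<Longrightarrow> y \<in> A \<Longrightarrow> m [y, y, x] = x"
begin

lemma R_lemma:
  assumes pq: "prime_quotient A F \<alpha> \<beta>" and cd: "(c, d) \<in> \<beta>" "(c, d) \<notin> \<alpha>" and xy: "(x, y) \<in> \<beta>"
  shows "\<exists>p\<in>upoly A F. (x, p c) \<in> \<alpha> \<and> (p d, y) \<in> \<alpha>"
proof -
  have aC: "\<alpha> \<in> Con A F" and bC: "\<beta> \<in> Con A F" using pq unfolding prime_quotient_def by auto
  have cA: "c \<in> A" "d \<in> A" using Con_sub[OF bC] cd by auto
  define R where "R = {(x, y). x \<in> A \<and> y \<in> A \<and> (\<exists>p\<in>upoly A F. (x, p c) \<in> \<alpha> \<and> (p d, y) \<in> \<alpha>)}"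
  have pA: "p \<in> upoly A F \<Longrightarrow> p c \<in> A \<and> p d \<in> A" for p using upoly_A[OF alg] cA by auto
  have eqv: "equiv A R"
  proof -
    have "R \<subseteq> A \<times> A" unfolding R_def by auto
    moreover have "(x, x) \<in> R" if "x \<in> A" for x
      unfolding R_def using that by (auto intro!: bexI[of _ "\<lambda>z. x"] upoly_const Con_refl[OF aC])
    moreover have "(y, x) \<in> R" if "(x, y) \<in> R" for x y
    proof -
      from that obtain p where p: "p \<in> upoly A F" "(x, p c) \<in> \<alpha>" "(p d, y) \<in> \<alpha>" "x \<in> A" "y \<in> A"
        unfolding R_def by auto
      define p' where "p' u = m [p c, p u, p d]" for u
      have "p' \<in> upoly A F" unfolding p'_def
        by (rule upoly_m3[OF mp upoly_const p(1) upoly_const]) (use pA p in auto)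
      moreover have "p' c = p d" "p' d = p c" unfolding p'_def using pA[OF p(1)] mx1 mx2 by auto
      ultimately show ?thesis unfolding R_def using p Con_sym[OF aC] by (auto intro!: bexI[of _ p'])
    qed
    moreover have "(x, z) \<in> R" if "(x, y) \<in> R" "(y, z) \<in> R" for x y z
    proof -
      from that obtain p q where p: "p \<in> upoly A F" "(x, p c) \<in> \<alpha>" "(p d, y) \<in> \<alpha>" "x \<in> A" "z \<in> A"
        and q: "q \<in> upoly A F" "(y, q c) \<in> \<alpha>" "(q d, z) \<in> \<alpha>"
        unfolding R_def by auto
      define r where "r u = m [p u, q c, q u]" for u
      have "r \<in> upoly A F" unfolding r_def
        by (rule upoly_m3[OF mp p(1) upoly_const q(1)]) (use pA q in auto)
      moreover have "r c = p c" unfolding r_def using pA[OF p(1)] pA[OF q(1)] mx1 by auto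
      moreover have "(r d, z) \<in> \<alpha>"
      proof -
        have "(p d, q c) \<in> \<alpha>" using p(3) q(2) Con_trans[OF aC] by blast
        then have "(m [p d, q c, q d], m [q c, q c, q d]) \<in> \<alpha>"
          using m3_cong[OF alg aC mp] Con_refl[OF aC] pA[OF q(1)] by blast
        moreover have "m [q c, q c, q d] = q d" using pA[OF q(1)] mx2 by auto
        ultimately show ?thesis unfolding r_def using q(3) Con_trans[OF aC] by auto
      qed
      ultimately show ?thesis unfolding R_def using p by (auto intro!: bexI[of _ r])
    qed
    ultimately show ?thesis unfolding equiv_def refl_on_def sym_def trans_def by blast
  qed
  have RC: "R \<in> Con A F"
  proof (rule unary_closed_Con[OF alg eqv])
    fix u x y assume u: "u \<in> upoly A F" and xy: "(x, y) \<in> R"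
    then obtain p where p: "p \<in> upoly A F" "(x, p c) \<in> \<alpha>" "(p d, y) \<in> \<alpha>" "x \<in> A" "y \<in> A"
      unfolding R_def by auto
    have "(\<lambda>z. u (p z)) \<in> upoly A F" using upoly_comp[OF u p(1)] .
    moreover have "(u x, u (p c)) \<in> \<alpha>" "(u (p d), u y) \<in> \<alpha>" using upoly_cong[OF alg aC u] p by auto
    ultimately show "(u x, u y) \<in> R" unfolding R_def using upoly_A[OF alg u] p by auto
  qed
  have aR: "\<alpha> \<subseteq> R"
  proof
    fix z assume z: "z \<in> \<alpha>"
    then obtain x y where [simp]: "z = (x, y)" and xy: "(x, y) \<in> \<alpha>" by (cases z) auto
    have "x \<in> A" "y \<in> A" using Con_sub[OF aC] xy by auto
    then show "z \<in> R" unfolding R_def using xy by (auto intro!: bexI[of _ "\<lambda>z. x"] upoly_const Con_refl[OF aC])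
  qed
  have "(c, d) \<in> R" unfolding R_def using cA by (auto intro!: bexI[of _ "\<lambda>z. z"] upoly_id Con_refl[OF aC])
  then have "R \<inter> \<beta> = \<beta>"
    using pq_cover[OF pq Con_Int[OF alg RC bC]] aR pq cd unfolding prime_quotient_def by blast
  then show ?thesis using xy unfolding R_def by blast
qed

end

context malg begin

lemma min_set:
  assumes pq: "prime_quotient A F \<alpha> \<beta>"
  shows "\<exists>e0 k. e0 \<in> upoly A F \<and> separates e0 \<alpha> \<beta> \<and> e0 ` A \<in> minimal_sets A F \<alpha> \<beta> \<and>
     k \<in> upoly A F \<and> idempotent_on A k \<and> k ` A = e0 ` A"
proof -
  have aC: "\<alpha> \<in> Con A F" and bC: "\<beta> \<in> Con A F" and ab: "\<alpha> \<subset> \<beta>"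
    using pq unfolding prime_quotient_def by auto
  have "separates (\<lambda>x. x) \<alpha> \<beta>" unfolding separates_def using ab by auto
  then have "upoly_id_sep": "(\<lambda>x. x) \<in> upoly A F \<and> separates (\<lambda>x. x) \<alpha> \<beta>" using upoly_id by blast
  from ex_has_least_nat[of "\<lambda>e. e \<in> upoly A F \<and> separates e \<alpha> \<beta>", OF this, of "\<lambda>e. card (e ` A)"]
  obtain e0 where e0: "e0 \<in> upoly A F" "separates e0 \<alpha> \<beta>"
    and least: "\<And>e. e \<in> upoly A F \<Longrightarrow> separates e \<alpha> \<beta> \<Longrightarrow> card (e0 ` A) \<le> card (e ` A)"
    by blast
  define U where "U = e0 ` A"
  have finU: "finite U" unfolding U_def using fin by simp
  have UA: "U \<subseteq> A" unfolding U_def using upoly_A[OF alg e0(1)] by blast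
  have minU: "e ` A = U" if "e \<in> upoly A F" "separates e \<alpha> \<beta>" "e ` A \<subseteq> U" for e
  proof -
    have "card U \<le> card (e ` A)" using least[OF that(1,2)] unfolding U_def .
    moreover have "card (e ` A) \<le> card U" using card_mono[OF finU that(3)] .
    ultimately have "card (e ` A) = card U" by linarith
    then show ?thesis by (rule card_subset_eq[OF finU that(3)])
  qed
  have c1: "\<exists>e\<in>upoly A F. separates e \<alpha> \<beta> \<and> U = e ` A" using e0 U_def by blast
  have c2: "\<forall>e\<in>upoly A F. separates e \<alpha> \<beta> \<and> e ` A \<subseteq> U \<longrightarrow> e ` A = U" using minU by blast
  have Umin: "U \<in> minimal_sets A F \<alpha> \<beta>" unfolding minimal_sets_def by (intro CollectI conjI c1 c2)
  obtain x y where xy: "(x, y) \<in> \<beta>" "(e0 x, e0 y) \<notin> \<alpha>"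
    using e0(2) unfolding separates_def by auto
  have "(e0 x, e0 y) \<in> \<beta>" using upoly_cong[OF alg bC e0(1) xy(1)] .
  from sep_lemma[OF alg pq e0 this xy(2)] obtain t where t: "t \<in> upoly A F"
    "(e0 (t (e0 x)), e0 (t (e0 y))) \<notin> \<alpha>" by blast
  define h where "h z = e0 (t z)" for z
  have hU: "h \<in> upoly A F" unfolding h_def using upoly_comp[OF e0(1) t(1)] .
  have f1: "(\<lambda>z. h (e0 z)) \<in> upoly A F" using upoly_comp[OF hU e0(1)] .
  have im: "(e0 (t (e0 x)), e0 (t (e0 y))) \<in> (\<lambda>(x, y). (h (e0 x), h (e0 y))) ` \<beta>"
    using xy(1) unfolding h_def by (rule rev_image_eqI) simp
  have f2: "separates (\<lambda>z. h (e0 z)) \<alpha> \<beta>" unfolding separates_def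
    using im t(2) by blast
  have f3: "(\<lambda>z. h (e0 z)) ` A \<subseteq> U" unfolding U_def h_def using upoly_A[OF alg t(1)] upoly_A[OF alg e0(1)] by auto
  have "(\<lambda>z. h (e0 z)) ` A = U" using minU[OF f1 f2 f3] .
  then have hUU: "h ` U = U" unfolding U_def by (simp add: image_image)
  from perm_power[OF finU hUU] obtain n where n: "n > 0" "\<And>u. u \<in> U \<Longrightarrow> (h ^^ n) u = u" by blast
  define k where "k = h ^^ n"
  have kU: "k \<in> upoly A F" unfolding k_def using upoly_funpow[OF hU] .
  have kA: "k z \<in> U" if "z \<in> A" for z
  proof -
    obtain n' where "n = Suc n'" using n(1) by (cases n) auto
    then have "k z = e0 (t ((h ^^ n') z))" unfolding k_def h_def by simp
    moreover have "(h ^^ n') z \<in> A" using upoly_A[OF alg upoly_funpow[OF hU] that] .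
    ultimately show ?thesis unfolding U_def using upoly_A[OF alg t(1)] by auto
  qed
  have kid: "idempotent_on A k" unfolding idempotent_on_def using kA n(2) unfolding k_def by auto
  have kim: "k ` A = U"
  proof
    show "k ` A \<subseteq> U" using kA by auto
    show "U \<subseteq> k ` A"
    proof
      fix u assume u: "u \<in> U"
      then have "k u = u" using n(2) unfolding k_def by auto
      then show "u \<in> k ` A" using u UA by (metis image_eqI subsetD)
    qed
  qed
  have kim': "k ` A = e0 ` A" using kim unfolding U_def .
  have Umin': "e0 ` A \<in> minimal_sets A F \<alpha> \<beta>" using Umin unfolding U_def .
  show ?thesis by (rule exI[of _ e0], rule exI[of _ k], intro conjI e0 Umin' kU kid kim')
qed

definition Us :: "'a set set" where
  "Us = \<Union>{minimal_sets A F \<alpha> \<beta> | \<alpha> \<beta>. prime_quotient A F \<alpha> \<beta>}"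

definition Bs :: "('a \<Rightarrow> 'a) set" where
  "Bs = {b. \<exists>e \<rho>. b = (\<lambda>x. e (\<rho> x)) \<and> e \<in> upoly A F \<and> idempotent_on A e \<and> e ` A \<in> Us \<and> \<rho> \<in> upoly A F}"

definition rep :: "nat \<Rightarrow> (nat \<Rightarrow> 'a \<Rightarrow> 'a) \<Rightarrow> ('a \<Rightarrow> 'a) \<Rightarrow> bool" where
  "rep k E g \<longleftrightarrow> (\<exists>lam\<in>poly A F k. \<forall>x\<in>A. lam (map (\<lambda>i. E i x) [0..<k]) = g x)"

definition good :: "('a \<Rightarrow> 'a) \<Rightarrow> bool" where
  "good g \<longleftrightarrow> (\<exists>k E. (\<forall>i<k. E i \<in> Bs) \<and> rep k E g)"

definition cat :: "nat \<Rightarrow> (nat \<Rightarrow> 'a \<Rightarrow> 'a) \<Rightarrow> (nat \<Rightarrow> 'a \<Rightarrow> 'a) \<Rightarrow> nat \<Rightarrow> 'a \<Rightarrow> 'a" where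
  "cat k1 E1 E2 i = (if i < k1 then E1 i else E2 (i - k1))"

lemma rep_const: "c \<in> A \<Longrightarrow> rep k E (\<lambda>_. c)"
  unfolding rep_def by (auto intro!: bexI[of _ "\<lambda>_. c"] poly.const)

lemma rep_basic: "i < k \<Longrightarrow> rep k E (E i)"
  unfolding rep_def by (auto intro!: bexI[of _ "\<lambda>xs. xs ! i"] poly.proj)

lemma rep_left:
  assumes "rep k1 E1 g" shows "rep (k1 + k2) (cat k1 E1 E2) g"
proof -
  from assms obtain lam where lam: "lam \<in> poly A F k1" "\<And>x. x \<in> A \<Longrightarrow> lam (map (\<lambda>i. E1 i x) [0..<k1]) = g x"
    unfolding rep_def by blast
  have "(\<lambda>xs. lam (map (\<lambda>j. xs ! j) [0..<k1])) \<in> poly A F (k1 + k2)"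
  proof -
    have P: "\<forall>j<k1. (\<lambda>xs. xs ! j) \<in> poly A F (k1 + k2)" by (auto intro: poly.proj)
    show ?thesis using poly_subst[OF lam(1) P] by simp
  qed
  moreover have M: "map (\<lambda>j. map (\<lambda>i. cat k1 E1 E2 i x) [0..<k1 + k2] ! j) [0..<k1] = map (\<lambda>i. E1 i x) [0..<k1]" for x
    by (rule map_cong) (auto simp: cat_def nth_append)
  ultimately show ?thesis unfolding rep_def
    by (intro bexI[of _ "\<lambda>xs. lam (map (\<lambda>j. xs ! j) [0..<k1])"]) (auto simp only: M lam(2))
qed

lemma rep_right:
  assumes "rep k2 E2 g" shows "rep (k1 + k2) (cat k1 E1 E2) g"
proof -
  from assms obtain lam where lam: "lam \<in> poly A F k2" "\<And>x. x \<in> A \<Longrightarrow> lam (map (\<lambda>i. E2 i x) [0..<k2]) = g x"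
    unfolding rep_def by blast
  have "(\<lambda>xs. lam (map (\<lambda>j. xs ! (k1 + j)) [0..<k2])) \<in> poly A F (k1 + k2)"
  proof -
    have P: "\<forall>j<k2. (\<lambda>xs. xs ! (k1 + j)) \<in> poly A F (k1 + k2)" by (auto intro: poly.proj)
    show ?thesis using poly_subst[OF lam(1) P] by simp
  qed
  moreover have M: "map (\<lambda>j. map (\<lambda>i. cat k1 E1 E2 i x) [0..<k1 + k2] ! (k1 + j)) [0..<k2] = map (\<lambda>i. E2 i x) [0..<k2]" for x
    by (rule map_cong) (auto simp: cat_def)
  ultimately show ?thesis unfolding rep_def
    by (intro bexI[of _ "\<lambda>xs. lam (map (\<lambda>j. xs ! (k1 + j)) [0..<k2])"]) (auto simp only: M lam(2))
qed

lemma rep_m3: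
  assumes "rep k E g1" "rep k E g2" "rep k E g3"
  shows "rep k E (\<lambda>x. m [g1 x, g2 x, g3 x])"
proof -
  from assms obtain l1 l2 l3 where l: "l1 \<in> poly A F k" "l2 \<in> poly A F k" "l3 \<in> poly A F k"
    "\<And>x. x \<in> A \<Longrightarrow> l1 (map (\<lambda>i. E i x) [0..<k]) = g1 x"
    "\<And>x. x \<in> A \<Longrightarrow> l2 (map (\<lambda>i. E i x) [0..<k]) = g2 x"
    "\<And>x. x \<in> A \<Longrightarrow> l3 (map (\<lambda>i. E i x) [0..<k]) = g3 x"
    unfolding rep_def by metis
  have "(\<lambda>xs. m (map (\<lambda>j. ([l1, l2, l3] ! j) xs) [0..<3])) \<in> poly A F k"
    using poly_subst[OF mp, of "\<lambda>j. [l1, l2, l3] ! j" k] l(1-3) by (auto simp: all3)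
  then have "(\<lambda>xs. m [l1 xs, l2 xs, l3 xs]) \<in> poly A F k" by (simp add: map3)
  then show ?thesis unfolding rep_def
    by (intro bexI[of _ "\<lambda>xs. m [l1 xs, l2 xs, l3 xs]"]) (simp_all add: l(4-6))
qed

lemma rep_upoly:
  assumes "rep k E g" "u \<in> upoly A F" shows "rep k E (\<lambda>x. u (g x))"
proof -
  from assms(1) obtain lam where lam: "lam \<in> poly A F k" "\<And>x. x \<in> A \<Longrightarrow> lam (map (\<lambda>i. E i x) [0..<k]) = g x"
    unfolding rep_def by blast
  from assms(2) obtain p where p: "p \<in> poly A F 1" "u = (\<lambda>x. p [x])" by (rule upolyE)
  have "(\<lambda>xs. p (map (\<lambda>j. lam xs) [0..<1])) \<in> poly A F k"
    using poly_subst[OF p(1), of "\<lambda>_. lam" k] lam(1) by auto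
  then have "(\<lambda>xs. p [lam xs]) \<in> poly A F k" by simp
  then show ?thesis unfolding rep_def
    by (intro bexI[of _ "\<lambda>xs. p [lam xs]"]) (simp_all add: lam(2) p(2))
qed

lemma good_const: "c \<in> A \<Longrightarrow> good (\<lambda>_. c)"
  unfolding good_def
proof (intro exI conjI)
  assume "c \<in> A"
  then show "rep 0 E (\<lambda>_. c)" for E by (rule rep_const)
qed simp

lemma good_basic: "b \<in> Bs \<Longrightarrow> good b"
  unfolding good_def
proof (intro exI conjI)
  assume "b \<in> Bs"
  then show "\<forall>i<1. (\<lambda>_. b) i \<in> Bs" by simp
  show "rep 1 (\<lambda>_. b) b" using rep_basic[of 0 1 "\<lambda>_. b"] by simp
qed

lemma good_upoly: "good g \<Longrightarrow> u \<in> upoly A F \<Longrightarrow> good (\<lambda>x. u (g x))"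
proof -
  assume "good g" "u \<in> upoly A F"
  then obtain k E where B: "\<forall>i<k. E i \<in> Bs" and R: "rep k E g" unfolding good_def by blast
  have R': "rep k E (\<lambda>x. u (g x))" using rep_upoly[OF R \<open>u \<in> upoly A F\<close>] .
  show ?thesis unfolding good_def by (rule exI[of _ k], rule exI[of _ E], rule conjI[OF B R'])
qed

lemma good_m3:
  assumes "good g1" "good g2" "good g3"
  shows "good (\<lambda>x. m [g1 x, g2 x, g3 x])"
proof -
  obtain k1 E1 where 1: "\<forall>i<k1. E1 i \<in> Bs" "rep k1 E1 g1" using assms(1) unfolding good_def by blast
  obtain k2 E2 where 2: "\<forall>i<k2. E2 i \<in> Bs" "rep k2 E2 g2" using assms(2) unfolding good_def by blast
  obtain k3 E3 where 3: "\<forall>i<k3. E3 i \<in> Bs" "rep k3 E3 g3" using assms(3) unfolding good_def by blast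
  define E where "E = cat (k1 + k2) (cat k1 E1 E2) E3"
  have "rep (k1 + k2 + k3) E g1" unfolding E_def by (rule rep_left, rule rep_left, rule 1(2))
  moreover have "rep (k1 + k2 + k3) E g2" unfolding E_def by (rule rep_left, rule rep_right, rule 2(2))
  moreover have "rep (k1 + k2 + k3) E g3" unfolding E_def by (rule rep_right, rule 3(2))
  ultimately have R: "rep (k1 + k2 + k3) E (\<lambda>x. m [g1 x, g2 x, g3 x])" by (rule rep_m3)
  have B: "\<forall>i<k1 + k2 + k3. E i \<in> Bs"
  proof (intro allI impI)
    fix i assume i: "i < k1 + k2 + k3"
    show "E i \<in> Bs"
    proof (cases "i < k1 + k2")
      case True then show ?thesis unfolding E_def cat_def using 1(1) 2(1) by simp
    next
      case False then show ?thesis unfolding E_def cat_def using 3(1) i by simp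
    qed
  qed
  show ?thesis unfolding good_def
    by (rule exI[of _ "k1+k2+k3"], rule exI[of _ E], rule conjI[OF B R])
qed

end

context malg begin

lemma main_ext:
  assumes pq: "prime_quotient A F \<alpha> \<beta>" and gU: "g \<in> upoly A F" and gg: "good g"
    and gb: "\<forall>x\<in>A. (g x, x) \<in> \<beta>" and ga: "\<forall>x\<in>S. (g x, x) \<in> \<alpha>" and z: "z \<in> A"
  shows "\<exists>g'. g' \<in> upoly A F \<and> good g' \<and> (\<forall>x\<in>A. (g' x, x) \<in> \<beta>) \<and> (\<forall>x\<in>insert z S. (g' x, x) \<in> \<alpha>)"
proof (cases "(g z, z) \<in> \<alpha>")
  case True
  then show ?thesis using gU gg gb ga by blast
next
  case False
  have aC: "\<alpha> \<in> Con A F" and bC: "\<beta> \<in> Con A F" using pq unfolding prime_quotient_def by auto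
  from min_set[OF pq] obtain e0 k where e0: "e0 \<in> upoly A F" "separates e0 \<alpha> \<beta>"
    and Umin: "e0 ` A \<in> minimal_sets A F \<alpha> \<beta>" and kU: "k \<in> upoly A F" and kid: "idempotent_on A k"
    and kim: "k ` A = e0 ` A" by blast
  define hz where "hz = g z"
  have hzA: "hz \<in> A" unfolding hz_def using upoly_A[OF alg gU z] .
  have hzb: "(hz, z) \<in> \<beta>" using gb z unfolding hz_def by auto
  have hza: "(hz, z) \<notin> \<alpha>" using False unfolding hz_def .
  from sep_lemma[OF alg pq e0 hzb hza] obtain t where t: "t \<in> upoly A F"
    "(e0 (t hz), e0 (t z)) \<notin> \<alpha>" by blast
  define u0 where "u0 y = e0 (t y)" for y
  have u0U: "u0 \<in> upoly A F" unfolding u0_def using upoly_comp[OF e0(1) t(1)] .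
  define c where "c = u0 hz"
  define d where "d = u0 z"
  have cdb: "(c, d) \<in> \<beta>" unfolding c_def d_def using upoly_cong[OF alg bC u0U hzb] .
  have cda: "(c, d) \<notin> \<alpha>" unfolding c_def d_def u0_def using t(2) .
  from R_lemma[OF pq cdb cda hzb] obtain p where p: "p \<in> upoly A F" "(hz, p c) \<in> \<alpha>" "(p d, z) \<in> \<alpha>"
    by blast
  have cA: "c \<in> A" unfolding c_def using upoly_A[OF alg u0U hzA] .
  have pcA: "p c \<in> A" using upoly_A[OF alg p(1) cA] .
  define w where "w x = m [hz, g x, x]" for x
  have wU: "w \<in> upoly A F" unfolding w_def
    by (rule upoly_m3[OF mp upoly_const[OF hzA] gU upoly_id])
  define \<rho> where "\<rho> x = u0 (w x)" for x
  have \<rho>U: "\<rho> \<in> upoly A F" unfolding \<rho>_def using upoly_comp[OF u0U wU] .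
  have UUs: "e0 ` A \<in> Us" unfolding Us_def using pq Umin by blast
  have bB: "(\<lambda>x. k (\<rho> x)) \<in> Bs" unfolding Bs_def
    using kU kid kim UUs \<rho>U by (intro CollectI exI[of _ k] exI[of _ \<rho>]) simp
  define v where "v x = p (k (\<rho> x))" for x
  have vU: "v \<in> upoly A F" unfolding v_def using upoly_comp[OF p(1) upoly_comp[OF kU \<rho>U]] .
  have vg: "good v" unfolding v_def using good_upoly[OF good_basic[OF bB] p(1)] .
  have kfix: "k y = y" if "y \<in> e0 ` A" for y
  proof -
    from that kim obtain a where a: "a \<in> A" "y = k a" by auto
    then show ?thesis using kid unfolding idempotent_on_def by auto
  qed
  have vx: "v x = p (\<rho> x)" if "x \<in> A" for x
  proof -
    have "w x \<in> A" using upoly_A[OF alg wU that] .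
    then have "t (w x) \<in> A" using upoly_A[OF alg t(1)] by blast
    then have "\<rho> x \<in> e0 ` A" unfolding \<rho>_def u0_def by blast
    then show ?thesis unfolding v_def using kfix by simp
  qed
  define g' where "g' x = m [g x, p c, v x]" for x
  have g'U: "g' \<in> upoly A F" unfolding g'_def
    by (rule upoly_m3[OF mp gU upoly_const[OF pcA] vU])
  have g'g: "good g'" unfolding g'_def
    by (rule good_m3[OF gg good_const[OF pcA] vg])
  have close: "(g' x, x) \<in> \<gamma>" if g: "\<gamma> \<in> Con A F" "\<gamma> = \<alpha> \<or> \<gamma> = \<beta>" and x: "x \<in> A" and gx: "(g x, x) \<in> \<gamma>" for \<gamma> x
  proof -
    have gxA: "g x \<in> A" using upoly_A[OF alg gU x] .
    have "(w x, m [hz, x, x]) \<in> \<gamma>" unfolding w_def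
      by (rule m3_cong[OF alg g(1) mp Con_refl[OF g(1) hzA] gx Con_refl[OF g(1) x]])
    then have "(w x, hz) \<in> \<gamma>" using mx1[OF hzA x] by simp
    then have "(p (\<rho> x), p c) \<in> \<gamma>" unfolding \<rho>_def c_def
      using upoly_cong[OF alg g(1) u0U] upoly_cong[OF alg g(1) p(1)] by blast
    then have "(v x, p c) \<in> \<gamma>" using vx[OF x] by simp
    then have "(m [g x, p c, v x], m [g x, p c, p c]) \<in> \<gamma>"
      by (rule m3_cong[OF alg g(1) mp Con_refl[OF g(1) gxA] Con_refl[OF g(1) pcA]])
    then have "(g' x, g x) \<in> \<gamma>" unfolding g'_def using mx1[OF gxA pcA] by simp
    then show ?thesis using gx Con_trans[OF g(1)] by blast
  qed
  have closez: "(g' z, z) \<in> \<alpha>"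
  proof -
    have "w z = z" unfolding w_def hz_def[symmetric] using mx2[OF z hzA] .
    then have "v z = p d" using vx[OF z] unfolding \<rho>_def d_def by simp
    moreover have "(m [hz, p c, p d], m [hz, hz, z]) \<in> \<alpha>"
      by (rule m3_cong[OF alg aC mp Con_refl[OF aC hzA] Con_sym[OF aC p(2)] p(3)])
    ultimately show ?thesis unfolding g'_def hz_def[symmetric] using mx2[OF z hzA] by simp
  qed
  have "\<forall>x\<in>A. (g' x, x) \<in> \<beta>" using close[OF bC] gb by blast
  moreover have "\<forall>x\<in>insert z S. (g' x, x) \<in> \<alpha>"
  proof
    fix x assume "x \<in> insert z S"
    then show "(g' x, x) \<in> \<alpha>"
    proof
      assume "x = z" then show ?thesis using closez by simp
    next
      assume xS: "x \<in> S"
      then have "x \<in> A" using ga Con_sub[OF aC] by blast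
      then show ?thesis using close[OF aC] ga xS by blast
    qed
  qed
  ultimately show ?thesis using g'U g'g by blast
qed

lemma step_lemma:
  assumes pq: "prime_quotient A F \<alpha> \<beta>" and hU: "h \<in> upoly A F" and hg: "good h"
    and hb: "\<forall>x\<in>A. (h x, x) \<in> \<beta>" and S: "S \<subseteq> A"
  shows "\<exists>g. g \<in> upoly A F \<and> good g \<and> (\<forall>x\<in>A. (g x, x) \<in> \<beta>) \<and> (\<forall>x\<in>S. (g x, x) \<in> \<alpha>)"
proof -
  have "finite S" using S fin finite_subset by blast
  then show ?thesis using S
  proof (induction S rule: finite_induct)
    case empty
    then show ?case using hU hg hb by blast
  next
    case (insert z S)
    then obtain g where "g \<in> upoly A F" "good g" "\<forall>x\<in>A. (g x, x) \<in> \<beta>" "\<forall>x\<in>S. (g x, x) \<in> \<alpha>"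
      by blast
    moreover have "z \<in> A" using insert.prems by blast
    ultimately show ?case using main_ext[OF pq] by blast
  qed
qed

lemma con_ind:
  "\<gamma> \<in> Con A F \<Longrightarrow> \<exists>g. g \<in> upoly A F \<and> good g \<and> (\<forall>x\<in>A. (g x, x) \<in> \<gamma>)"
proof (induction "card (A \<times> A - \<gamma>)" arbitrary: \<gamma> rule: less_induct)
  case less
  note gC = less.prems
  show ?case
  proof (cases "\<gamma> = A \<times> A")
    case True
    obtain a where a: "a \<in> A" using alg unfolding algebra_def by blast
    have "(\<lambda>_. a) \<in> upoly A F" using upoly_const[OF a] .
    moreover have "good (\<lambda>_. a)" using good_const[OF a] .
    moreover have "\<forall>x\<in>A. ((\<lambda>_. a) x, x) \<in> \<gamma>" using True a by simp
    ultimately show ?thesis by blast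
  next
    case False
    have gsub: "\<gamma> \<subseteq> A \<times> A" using Con_sub[OF gC] .
    define C where "C = {\<delta>. \<delta> \<in> Con A F \<and> \<gamma> \<subset> \<delta>}"
    have "A \<times> A \<in> C" unfolding C_def using UNIV_Con[OF alg] gsub False by blast
    from ex_has_least_nat[of "\<lambda>\<delta>. \<delta> \<in> C", OF this, of card]
    obtain \<beta> where b: "\<beta> \<in> C" and least: "\<And>\<delta>. \<delta> \<in> C \<Longrightarrow> card \<beta> \<le> card \<delta>" by blast
    have bC: "\<beta> \<in> Con A F" and gb: "\<gamma> \<subset> \<beta>" using b unfolding C_def by auto
    have bsub: "\<beta> \<subseteq> A \<times> A" using Con_sub[OF bC] .
    have finb: "finite \<beta>" using bsub fin finite_subset by blast
    have pq: "prime_quotient A F \<gamma> \<beta>" unfolding prime_quotient_def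
    proof (intro conjI gC bC gb notI)
      assume "\<exists>\<delta>\<in>Con A F. \<gamma> \<subset> \<delta> \<and> \<delta> \<subset> \<beta>"
      then obtain \<delta> where d: "\<delta> \<in> Con A F" "\<gamma> \<subset> \<delta>" "\<delta> \<subset> \<beta>" by blast
      have "card \<delta> < card \<beta>" using psubset_card_mono[OF finb d(3)] .
      moreover have "card \<beta> \<le> card \<delta>" using least d(1,2) unfolding C_def by blast
      ultimately show False by simp
    qed
    have lt: "card (A \<times> A - \<beta>) < card (A \<times> A - \<gamma>)"
    proof (rule psubset_card_mono)
      show "finite (A \<times> A - \<gamma>)" using fin by simp
      show "A \<times> A - \<beta> \<subset> A \<times> A - \<gamma>" using gb bsub by blast
    qed
    from less.hyps[OF lt bC] obtain h where h: "h \<in> upoly A F" "good h" "\<forall>x\<in>A. (h x, x) \<in> \<beta>"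
      by blast
    from step_lemma[OF pq h order_refl] show ?thesis by blast
  qed
qed

lemma covers_A: "covers A F Us {A}"
proof -
  from con_ind[OF Id_Con[OF alg]] obtain g where g: "good g" "\<forall>x\<in>A. (g x, x) \<in> Id_on A" by blast
  then obtain k E where B: "\<forall>i<k. E i \<in> Bs" and R: "rep k E g" unfolding good_def by blast
  from R obtain lam where lam: "lam \<in> poly A F k" "\<And>x. x \<in> A \<Longrightarrow> lam (map (\<lambda>i. E i x) [0..<k]) = g x"
    unfolding rep_def by blast
  have "\<forall>i. \<exists>e \<rho>. i < k \<longrightarrow> E i = (\<lambda>x. e (\<rho> x)) \<and> e \<in> upoly A F \<and> idempotent_on A e \<and> e ` A \<in> Us \<and> \<rho> \<in> upoly A F"
    using B unfolding Bs_def by blast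
  then obtain e \<rho> where er: "\<And>i. i < k \<Longrightarrow> E i = (\<lambda>x. e i (\<rho> i x)) \<and> e i \<in> upoly A F \<and> idempotent_on A (e i) \<and> e i ` A \<in> Us \<and> \<rho> i \<in> upoly A F"
    by metis
  have ev: "lam (map (\<lambda>i. e i (\<rho> i x)) [0..<k]) = x" if x: "x \<in> A" for x
  proof -
    have M: "map (\<lambda>i. e i (\<rho> i x)) [0..<k] = map (\<lambda>i. E i x) [0..<k]"
      by (rule map_cong) (use er in auto)
    have "g x = x" using g(2) x by auto
    then show ?thesis unfolding M using lam(2)[OF x] by simp
  qed
  show ?thesis unfolding covers_def
  proof (intro ballI)
    fix V assume "V \<in> {A}"
    then have V: "V = A" by simp
    have fU: "(\<lambda>x. x) \<in> upoly A F" by (rule upoly_id)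
    show "\<exists>k U e \<rho> lam f. (\<forall>i<k. U i \<in> Us \<and> e i \<in> upoly A F \<and> idempotent_on A (e i) \<and> e i ` A = U i \<and> \<rho> i \<in> upoly A F) \<and>
      f \<in> upoly A F \<and> idempotent_on A f \<and> f ` A = V \<and> lam \<in> poly A F k \<and>
      (\<forall>x\<in>A. lam (map (\<lambda>i. e i (\<rho> i x)) [0..<k]) = f x)"
      apply (rule exI[of _ k], rule exI[of _ "\<lambda>i. e i ` A"], rule exI[of _ e], rule exI[of _ \<rho>],
             rule exI[of _ lam], rule exI[of _ "\<lambda>x. x"])
      using er fU lam(1) ev V by (auto simp: idempotent_on_def)
  qed
qed

end

theorem theorem5p4:
  fixes A :: "'a set" and F :: "(nat \<times> ('a list \<Rightarrow> 'a)) set"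
  assumes "algebra A F" and "finite A" and "has_maltsev A F"
  shows "covers A F (\<Union>{minimal_sets A F \<alpha> \<beta> | \<alpha> \<beta>. prime_quotient A F \<alpha> \<beta>}) {A}"
proof -
  from assms(3) obtain m where m: "m \<in> poly A F 3" "\<forall>x\<in>A. \<forall>y\<in>A. m [x, y, y] = x \<and> m [y, y, x] = x"
    unfolding has_maltsev_def by blast
  interpret malg A F m using assms(1,2) m by unfold_locales auto
  show ?thesis using covers_A unfolding Us_def .
qed

end
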